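(* Let $k$ be a field of characteristic $p>0$, $S=k[[x_1,\dots,x_n]]$, and let $I=I_{\alpha_1}\cap\cdots\cap I_{\alpha_s}$ be the minimal primary decomposition of a squarefree monomial ideal $I\subseteq S$ into face ideals. Then for every $q=p^e$, $e\ge 0$, $$(I^{[q]}:_S I)=\big(I_{\alpha_1}^{[q]}+(({\bf x}^{\alpha_1})^{q-1})\big)\cap\cdots\cap\big(I_{\alpha_s}^{[q]}+(({\bf x}^{\alpha_s})^{q-1})\big).$$
   Context: For $\alpha\in\{0,1\}^n$, the face ideal is $I_\alpha=\langle x_i:\alpha_i\ne0\rangle$ and ${\bf x}^\alpha=x_1^{\alpha_1}\cdots x_n^{\alpha_n}$. A squarefree monomial ideal is an ideal generated by monomials ${\bf x}^\alpha$ with $\alpha\in\{0,1\}^n$; its minimal primary decomposition is an irredundant intersection of face ideals. $J^{[q]}$ denotes the ideal generated by $q$-th powers of elements of $J$. *)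

theory Defs
  imports Main
begin

text \<open>The formal power series ring S = k[[x_0,...,x_{n-1}]] (variables indexed 0..n-1).
  A power series is its coefficient function on exponent vectors (nat => nat);
  the carrier ps_carrier n consists of those coefficient functions vanishing on every
  exponent vector that involves a variable index >= n.\<close>

type_synonym 'a mps = "(nat \<Rightarrow> nat) \<Rightarrow> 'a"

definition ps_carrier :: "nat \<Rightarrow> ('a::zero) mps set" where
  "ps_carrier n = {f. \<forall>a. (\<exists>i\<ge>n. a i \<noteq> 0) \<longrightarrow> f a = 0}"

definition ps_zero :: "('a::zero) mps" where
  "ps_zero = (\<lambda>_. 0)"

definition ps_add :: "('a::plus) mps \<Rightarrow> 'a mps \<Rightarrow> 'a mps" where
  "ps_add f g = (\<lambda>c. f c + g c)"

definition ps_mult :: "('a::comm_semiring_1) mps \<Rightarrow> 'a mps \<Rightarrow> 'a mps" where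
  "ps_mult f g = (\<lambda>c. \<Sum>a\<in>{a. \<forall>i. a i \<le> c i}. f a * g (\<lambda>i. c i - a i))"

definition ps_monom :: "(nat \<Rightarrow> nat) \<Rightarrow> ('a::zero_neq_one) mps" where
  "ps_monom a = (\<lambda>c. if c = a then 1 else 0)"

definition ps_one :: "('a::zero_neq_one) mps" where
  "ps_one = ps_monom (\<lambda>_. 0)"

definition ps_var :: "nat \<Rightarrow> ('a::zero_neq_one) mps" where
  "ps_var i = ps_monom (\<lambda>j. if j = i then 1 else 0)"

primrec ps_pow :: "('a::comm_semiring_1) mps \<Rightarrow> nat \<Rightarrow> 'a mps" where
  "ps_pow f 0 = ps_one"
| "ps_pow f (Suc m) = ps_mult f (ps_pow f m)"

definition ps_is_ideal :: "nat \<Rightarrow> ('a::comm_semiring_1) mps set \<Rightarrow> bool" where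
  "ps_is_ideal n J \<longleftrightarrow> J \<subseteq> ps_carrier n \<and> ps_zero \<in> J
     \<and> (\<forall>f\<in>J. \<forall>g\<in>J. ps_add f g \<in> J)
     \<and> (\<forall>r\<in>ps_carrier n. \<forall>f\<in>J. ps_mult r f \<in> J)"

definition ps_ideal :: "nat \<Rightarrow> ('a::comm_semiring_1) mps set \<Rightarrow> 'a mps set" where
  "ps_ideal n G = \<Inter>{J. G \<subseteq> J \<and> ps_is_ideal n J}"

definition ps_ideal_sum :: "nat \<Rightarrow> ('a::comm_semiring_1) mps set \<Rightarrow> 'a mps set \<Rightarrow> 'a mps set" where
  "ps_ideal_sum n J K = ps_ideal n (J \<union> K)"

definition ps_colon :: "nat \<Rightarrow> ('a::comm_semiring_1) mps set \<Rightarrow> 'a mps set \<Rightarrow> 'a mps set" where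
  "ps_colon n J I = {f \<in> ps_carrier n. \<forall>g\<in>I. ps_mult f g \<in> J}"

definition ps_frob :: "nat \<Rightarrow> nat \<Rightarrow> ('a::comm_semiring_1) mps set \<Rightarrow> 'a mps set" where
  "ps_frob n q J = ps_ideal n {ps_pow f q | f. f \<in> J}"

text \<open>alpha in {0,1}^n, encoded as an exponent vector supported on {0..n-1}.\<close>
definition is01 :: "nat \<Rightarrow> (nat \<Rightarrow> nat) \<Rightarrow> bool" where
  "is01 n \<alpha> \<longleftrightarrow> (\<forall>i. \<alpha> i \<le> 1) \<and> (\<forall>i\<ge>n. \<alpha> i = 0)"

definition face_ideal :: "nat \<Rightarrow> (nat \<Rightarrow> nat) \<Rightarrow> ('a::comm_semiring_1) mps set" where
  "face_ideal n \<alpha> = ps_ideal n {ps_var i | i. i < n \<and> \<alpha> i \<noteq> 0}"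

definition sqfree_monomial_ideal :: "nat \<Rightarrow> ('a::comm_semiring_1) mps set \<Rightarrow> bool" where
  "sqfree_monomial_ideal n I \<longleftrightarrow>
     (\<exists>G. (\<forall>\<alpha>\<in>G. is01 n \<alpha>) \<and> I = ps_ideal n (ps_monom ` G))"

text \<open>Intersection of a family of ideals of S (the empty intersection is S itself).\<close>
definition ps_Inter :: "nat \<Rightarrow> ('a::zero) mps set set \<Rightarrow> 'a mps set" where
  "ps_Inter n F = ps_carrier n \<inter> \<Inter>F"

end

theory Submission imports Defs "HOL-Library.FuncSet" "HOL-Computational_Algebra.Primes" begin

definition fin :: "(nat \<Rightarrow> nat) \<Rightarrow> bool" where
  "fin c \<longleftrightarrow> finite {i. c i \<noteq> 0}"

definition mc :: "'a::zero \<Rightarrow> (nat \<Rightarrow> nat) \<Rightarrow> 'a mps" where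
  "mc a d = (\<lambda>x. if x = d then a else 0)"

definition FS :: "('a::zero) mps set" where
  "FS = {f. \<forall>c. \<not> fin c \<longrightarrow> f c = 0}"

lemma finite_le:
  assumes "fin c" shows "finite {a. \<forall>i. a i \<le> c i}"
proof -
  let ?S = "{i. c i \<noteq> 0}"
  have "{a. \<forall>i. a i \<le> c i} \<subseteq> (\<lambda>g i. if i \<in> ?S then g i else 0) ` (PiE ?S (\<lambda>i. {..c i}))"
  proof
    fix a assume a: "a \<in> {a. \<forall>i. a i \<le> c i}"
    have "a = (\<lambda>i. if i \<in> ?S then restrict a ?S i else 0)"
    proof
      fix i show "a i = (if i \<in> ?S then restrict a ?S i else 0)"
        using a[simplified, rule_format, of i] by (cases "c i = 0") auto
    qed
    moreover have "restrict a ?S \<in> PiE ?S (\<lambda>i. {..c i})" using a by auto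
    ultimately show "a \<in> (\<lambda>g i. if i \<in> ?S then g i else 0) ` (PiE ?S (\<lambda>i. {..c i}))"
      by blast
  qed
  moreover have "finite (PiE ?S (\<lambda>i. {..c i}))"
    using assms unfolding fin_def by (intro finite_PiE) auto
  ultimately show ?thesis by (meson finite_imageI finite_subset)
qed

lemma infinite_le:
  assumes "\<not> fin c" shows "infinite {a. \<forall>i. a i \<le> c i}"
proof
  assume f: "finite {a. \<forall>i. a i \<le> c i}"
  let ?h = "\<lambda>j. (\<lambda>i. if i = j then c j else 0)"
  have "inj_on ?h {i. c i \<noteq> 0}"
    by (auto simp: inj_on_def fun_eq_iff)
  moreover have "?h ` {i. c i \<noteq> 0} \<subseteq> {a. \<forall>i. a i \<le> c i}" by auto
  ultimately have "finite {i. c i \<noteq> 0}"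
    using f by (meson finite_imageD finite_subset)
  thus False using assms by (simp add: fin_def)
qed

lemma fin_le:
  assumes "fin c" "\<forall>i. a i \<le> c i" shows "fin a"
proof -
  have "{i. a i \<noteq> 0} \<subseteq> {i. c i \<noteq> 0}"
  proof (rule subsetI)
    fix i assume "i \<in> {i. a i \<noteq> 0}"
    thus "i \<in> {i. c i \<noteq> 0}" using assms(2)[rule_format, of i] by auto
  qed
  thus ?thesis using assms(1) unfolding fin_def by (rule finite_subset)
qed

lemma fin_add: "fin a \<Longrightarrow> fin b \<Longrightarrow> fin (\<lambda>i. a i + b i)"
  unfolding fin_def by (rule finite_subset[of _ "{i. a i \<noteq> 0} \<union> {i. b i \<noteq> 0}"]) auto

lemma fin_diff: "\<not> fin c \<Longrightarrow> fin d \<Longrightarrow> \<not> fin (\<lambda>i. c i - d i)"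
proof
  assume "\<not> fin c" "fin d" "fin (\<lambda>i. c i - d i)"
  hence "finite ({i. c i - d i \<noteq> 0} \<union> {i. d i \<noteq> 0})" unfolding fin_def by auto
  moreover have "{i. c i \<noteq> 0} \<subseteq> {i. c i - d i \<noteq> 0} \<union> {i. d i \<noteq> 0}" by auto
  ultimately show False using \<open>\<not> fin c\<close> unfolding fin_def by (meson finite_subset)
qed

lemma mult_support:
  assumes "ps_mult f g c \<noteq> 0"
  shows "\<exists>a. (\<forall>i. a i \<le> c i) \<and> f a \<noteq> 0 \<and> g (\<lambda>i. c i - a i) \<noteq> 0"
proof (rule ccontr)
  assume "\<not> ?thesis"
  hence "ps_mult f g c = 0" unfolding ps_mult_def by (intro sum.neutral) auto
  thus False using assms by simp
qed

lemma ps_mult_infinite: "\<not> fin c \<Longrightarrow> ps_mult f g c = 0"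
  unfolding ps_mult_def using infinite_le by simp

lemma ps_mult_comm: "ps_mult f g = ps_mult g (f :: 'a :: comm_semiring_1 mps)"
proof
  fix c
  show "ps_mult f g c = ps_mult g f c"
    unfolding ps_mult_def
    by (rule sum.reindex_bij_witness[where i="\<lambda>a i. c i - a i" and j="\<lambda>a i. c i - a i"])
       (auto simp: mult.commute)
qed

lemma ps_mult_assoc: "ps_mult (ps_mult f g) h = ps_mult f (ps_mult g (h :: 'a :: comm_semiring_1 mps))"
proof
  fix c
  show "ps_mult (ps_mult f g) h c = ps_mult f (ps_mult g h) c"
  proof (cases "fin c")
    case False thus ?thesis by (simp add: ps_mult_infinite)
  next
    case True
    let ?S = "\<lambda>c. {a. \<forall>i. a i \<le> c i}"
    have fS: "\<And>a. a \<in> ?S c \<Longrightarrow> finite (?S a)"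
      using True by (rule finite_le[OF fin_le]) auto
    have fS2: "\<And>b. b \<in> ?S c \<Longrightarrow> finite (?S (\<lambda>i. c i - b i))"
      using True by (intro finite_le fin_le[OF True]) auto
    have "ps_mult (ps_mult f g) h c = (\<Sum>a\<in>?S c. \<Sum>b\<in>?S a. f b * g (\<lambda>i. a i - b i) * h (\<lambda>i. c i - a i))"
      unfolding ps_mult_def by (simp add: sum_distrib_right)
    also have "\<dots> = (\<Sum>(a,b)\<in>(SIGMA a:?S c. ?S a). f b * g (\<lambda>i. a i - b i) * h (\<lambda>i. c i - a i))"
      by (rule sum.Sigma) (use finite_le[OF True] fS in auto)
    also have "\<dots> = (\<Sum>(b,d)\<in>(SIGMA b:?S c. ?S (\<lambda>i. c i - b i)). f b * (g d * h (\<lambda>i. c i - b i - d i)))"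
    proof (rule sum.reindex_bij_witness[where i="\<lambda>(b,d). (\<lambda>i. b i + d i, b)" and j="\<lambda>(a,b). (b, \<lambda>i. a i - b i)"])
      fix p assume p: "p \<in> (SIGMA a:?S c. ?S a)"
      obtain a b where [simp]: "p = (a,b)" by (cases p)
      from p have ab: "\<forall>i. b i \<le> a i" "\<forall>i. a i \<le> c i" by auto
      show "(\<lambda>(b, d). (\<lambda>i. b i + d i, b)) ((\<lambda>(a, b). (b, \<lambda>i. a i - b i)) p) = p"
        using ab by (auto simp: fun_eq_iff)
      show "(\<lambda>(a, b). (b, \<lambda>i. a i - b i)) p \<in> (SIGMA b:?S c. ?S (\<lambda>i. c i - b i))"
      proof -
        have "\<forall>i. b i \<le> c i \<and> a i - b i \<le> c i - b i"
        proof
          fix i show "b i \<le> c i \<and> a i - b i \<le> c i - b i"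
            using ab(1)[rule_format, of i] ab(2)[rule_format, of i] by arith
        qed
        thus ?thesis by simp
      qed
      have e: "(\<lambda>i. c i - b i - (a i - b i)) = (\<lambda>i. c i - a i)"
        using ab by (auto simp: fun_eq_iff)
      show "(\<lambda>(b, d). f b * (g d * h (\<lambda>i. c i - b i - d i))) ((\<lambda>(a, b). (b, \<lambda>i. a i - b i)) p) =
          (\<lambda>(a, b). f b * g (\<lambda>i. a i - b i) * h (\<lambda>i. c i - a i)) p"
        using e by (simp add: mult.assoc)
    next
      fix p assume p: "p \<in> (SIGMA b:?S c. ?S (\<lambda>i. c i - b i))"
      obtain b d where [simp]: "p = (b,d)" by (cases p)
      from p have bd: "\<forall>i. b i \<le> c i" "\<forall>i. d i \<le> c i - b i" by auto
      show "(\<lambda>(a, b). (b, \<lambda>i. a i - b i)) ((\<lambda>(b, d). (\<lambda>i. b i + d i, b)) p) = p"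
        by (auto simp: fun_eq_iff)
      show "(\<lambda>(b, d). (\<lambda>i. b i + d i, b)) p \<in> (SIGMA a:?S c. ?S a)"
      proof -
        have "\<forall>i. b i + d i \<le> c i \<and> b i \<le> b i + d i"
        proof
          fix i show "b i + d i \<le> c i \<and> b i \<le> b i + d i"
            using bd(1)[rule_format, of i] bd(2)[rule_format, of i] by arith
        qed
        thus ?thesis by simp
      qed
    qed
    also have "\<dots> = ps_mult f (ps_mult g h) c"
      unfolding ps_mult_def
      by (subst sum.Sigma[symmetric]) (use finite_le[OF True] fS2 in \<open>auto simp: sum_distrib_left\<close>)
    finally show ?thesis .
  qed
qed

lemma FS_mult: "ps_mult f g \<in> FS"
  unfolding FS_def by (simp add: ps_mult_infinite)

lemma mc_FS: "fin d \<Longrightarrow> mc a d \<in> FS"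
  unfolding FS_def mc_def by auto

lemma ps_mult_mc_right:
  assumes f: "f \<in> FS" and d: "fin d"
  shows "ps_mult f (mc b d) c = (if \<forall>i. d i \<le> c i then f (\<lambda>i. c i - d i) * (b :: 'a :: comm_semiring_1) else 0)"
proof (cases "fin c")
  case False
  hence "\<not> fin (\<lambda>i. c i - d i)" using fin_diff d by blast
  thus ?thesis using False f by (simp add: ps_mult_infinite FS_def)
next
  case True
  let ?S = "{a. \<forall>i. a i \<le> c i}"
  have "ps_mult f (mc b d) c = (\<Sum>a\<in>?S. if a = (\<lambda>i. c i - d i) then (if \<forall>i. d i \<le> c i then f a * b else 0) else 0)"
    unfolding ps_mult_def mc_def
  proof (rule sum.cong)
    fix a assume a: "a \<in> ?S"
    have "((\<lambda>i. c i - a i) = d) \<longleftrightarrow> (a = (\<lambda>i. c i - d i) \<and> (\<forall>i. d i \<le> c i))"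
      using a by (auto simp: fun_eq_iff) (metis diff_diff_cancel diff_le_self)+
    thus "f a * (if (\<lambda>i. c i - a i) = d then b else 0) =
       (if a = (\<lambda>i. c i - d i) then if \<forall>i. d i \<le> c i then f a * b else 0 else 0)" by auto
  qed simp
  also have "\<dots> = (if \<forall>i. d i \<le> c i then f (\<lambda>i. c i - d i) * b else 0)"
    using finite_le[OF True] by (subst sum.delta) auto
  finally show ?thesis .
qed

lemma mc_mult:
  assumes "fin d" "fin d'"
  shows "ps_mult (mc a d) (mc b d') = mc (a * b :: 'a :: comm_semiring_1) (\<lambda>i. d i + d' i)"
proof
  fix c
  have e: "((\<forall>i. d' i \<le> c i) \<and> (\<lambda>i. c i - d' i) = d) \<longleftrightarrow> c = (\<lambda>i. d i + d' i)"
    by (auto simp: fun_eq_iff) (metis le_add_diff_inverse2)+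
  show "ps_mult (mc a d) (mc b d') c = mc (a * b) (\<lambda>i. d i + d' i) c"
    using e by (subst ps_mult_mc_right[OF mc_FS[OF assms(1)] assms(2)]) (auto simp: mc_def)
qed

lemma ps_one_mc: "ps_one = mc 1 (\<lambda>_. 0)"
  unfolding ps_one_def ps_monom_def mc_def by simp

lemma ps_monom_mc: "ps_monom d = mc 1 d"
  unfolding ps_monom_def mc_def by simp

lemma fin0: "fin (\<lambda>_. 0)" by (simp add: fin_def)

lemma ps_mult_one: "f \<in> FS \<Longrightarrow> ps_mult f ps_one = (f :: 'a :: comm_semiring_1 mps)"
  by (rule ext) (simp add: ps_one_mc ps_mult_mc_right fin0)

typedef (overloaded) ('a::comm_semiring_1) fs = "FS :: 'a mps set"
  morphisms Rep_fs Abs_fs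
  by (rule exI[of _ "\<lambda>_. 0"]) (simp add: FS_def)

lemma ps_one_FS: "ps_one \<in> FS" by (simp add: ps_one_mc mc_FS fin0)
lemma zero_FS: "(\<lambda>_. 0) \<in> FS" by (simp add: FS_def)
lemma add_FS: "f \<in> FS \<Longrightarrow> g \<in> FS \<Longrightarrow> ps_add f g \<in> (FS :: 'a::comm_semiring_1 mps set)" by (auto simp: FS_def ps_add_def)

lemma mc_eq0: "mc a d = (\<lambda>_. 0) \<longleftrightarrow> a = 0"
proof
  assume "mc a d = (\<lambda>_. 0)"
  hence "mc a d d = 0" by simp
  thus "a = 0" by (simp add: mc_def)
qed (simp add: mc_def)

instantiation fs :: (comm_semiring_1) comm_semiring_1
begin
definition "0 = Abs_fs (\<lambda>_. 0)"
definition "1 = Abs_fs ps_one"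
definition "f + g = Abs_fs (ps_add (Rep_fs f) (Rep_fs g))"
definition "f * g = Abs_fs (ps_mult (Rep_fs f) (Rep_fs g))"

lemma Rep_fs_mult0: "Rep_fs (a * b) = ps_mult (Rep_fs a) (Rep_fs b)"
  unfolding times_fs_def by (rule Abs_fs_inverse[OF FS_mult])

lemma Rep_fs_add0: "Rep_fs (a + b) = ps_add (Rep_fs a) (Rep_fs b)"
  unfolding plus_fs_def by (rule Abs_fs_inverse[OF add_FS[OF Rep_fs Rep_fs]])

lemma Rep_fs_00: "Rep_fs 0 = (\<lambda>_. 0)"
  unfolding zero_fs_def by (rule Abs_fs_inverse[OF zero_FS])

lemma Rep_fs_10: "Rep_fs 1 = ps_one"
  unfolding one_fs_def by (rule Abs_fs_inverse[OF ps_one_FS])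

instance
proof
  fix a b c :: "'a fs"
  note R = Rep_fs_inject[symmetric] Rep_fs_mult0 Rep_fs_add0 Rep_fs_00 Rep_fs_10
  show "a * b * c = a * (b * c)"
    by (simp only: R ps_mult_assoc)
  show "a * b = b * a"
    by (simp only: R ps_mult_comm)
  show "1 * a = a"
    by (simp only: R) (simp add: ps_mult_comm[of ps_one] ps_mult_one[OF Rep_fs])
  show "a + b + c = a + (b + c)"
    by (simp only: R) (simp add: ps_add_def add.assoc)
  show "a + b = b + a"
    by (simp only: R) (simp add: ps_add_def add.commute)
  show "0 + a = a"
    by (simp only: R) (simp add: ps_add_def)
  show "0 * a = 0"
    by (simp only: R) (simp add: ps_mult_def)
  show "a * 0 = 0"
    by (simp only: R) (simp add: ps_mult_def)
  show "(a + b) * c = a * c + b * c"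
    by (simp only: R) (simp add: ps_add_def ps_mult_def sum.distrib distrib_right)
  show "(0::'a fs) \<noteq> 1"
  proof
    assume "(0::'a fs) = 1"
    hence "Rep_fs (0::'a fs) (\<lambda>_. 0) = Rep_fs (1::'a fs) (\<lambda>_. 0)" by simp
    thus False by (simp add: Rep_fs_00 Rep_fs_10 ps_one_mc mc_def)
  qed
qed
end

lemma Rep_fs_mult: "Rep_fs (a * b) = ps_mult (Rep_fs a) (Rep_fs b)"
  by (rule Rep_fs_mult0)

lemma Rep_fs_add: "Rep_fs (a + b) = ps_add (Rep_fs a) (Rep_fs b)"
  by (rule Rep_fs_add0)

lemma Rep_fs_0: "Rep_fs 0 = (\<lambda>_. 0)"
  by (simp add: zero_fs_def Abs_fs_inverse zero_FS)

lemma Rep_fs_1: "Rep_fs 1 = ps_one"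
  by (simp add: one_fs_def Abs_fs_inverse ps_one_FS)

lemma Rep_fs_sum: "Rep_fs (sum F D) = (\<lambda>x. \<Sum>d\<in>D. Rep_fs (F d) x)"
  by (induction D rule: infinite_finite_induct) (auto simp: Rep_fs_0 Rep_fs_add ps_add_def)

lemma Rep_fs_of_nat: "Rep_fs (of_nat m :: 'a::comm_semiring_1 fs) = mc (of_nat m) (\<lambda>_. 0)"
  by (induction m) (auto simp: Rep_fs_0 Rep_fs_add Rep_fs_1 ps_one_mc ps_add_def mc_def)

lemma CHAR_fs: "CHAR('a::comm_semiring_1 fs) = CHAR('a)"
proof -
  have e: "(of_nat m :: 'a fs) = 0 \<longleftrightarrow> (of_nat m :: 'a) = 0" for m
    by (simp add: Rep_fs_inject[symmetric] Rep_fs_of_nat Rep_fs_0 mc_eq0)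
  show ?thesis
    by (rule CHAR_eqI) (simp_all add: e of_nat_eq_0_iff_char_dvd)
qed

lemma ps_pow_Rep: "f \<in> FS \<Longrightarrow> ps_pow f k = Rep_fs (Abs_fs f ^ k)"
  by (induction k) (simp_all add: Rep_fs_1 Rep_fs_mult Abs_fs_inverse)

definition agree :: "(nat \<Rightarrow> nat) \<Rightarrow> 'a::comm_semiring_1 fs \<Rightarrow> 'a fs \<Rightarrow> bool" where
  "agree c F H \<longleftrightarrow> (\<forall>d. (\<forall>i. d i \<le> c i) \<longrightarrow> Rep_fs F d = Rep_fs H d)"

lemma agree_mult:
  assumes "agree c F F'" "agree c H H'" shows "agree c (F * H) (F' * H')"
  unfolding agree_def Rep_fs_mult ps_mult_def
proof (intro allI impI sum.cong refl)
  fix d a assume d: "\<forall>i. d i \<le> c i" and a: "a \<in> {a. \<forall>i. a i \<le> d i}"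
  have ac: "\<forall>i. a i \<le> c i"
  proof
    fix i show "a i \<le> c i" using a[simplified, rule_format, of i] d[rule_format, of i] by arith
  qed
  have dc: "\<forall>i. d i - a i \<le> c i"
  proof
    fix i show "d i - a i \<le> c i" using d[rule_format, of i] by arith
  qed
  have "Rep_fs F a = Rep_fs F' a" using assms(1)[unfolded agree_def, rule_format, of a] ac by simp
  moreover have "Rep_fs H (\<lambda>i. d i - a i) = Rep_fs H' (\<lambda>i. d i - a i)"
    using assms(2)[unfolded agree_def, rule_format, of "\<lambda>i. d i - a i"] dc by simp
  ultimately show "Rep_fs F a * Rep_fs H (\<lambda>i. d i - a i) = Rep_fs F' a * Rep_fs H' (\<lambda>i. d i - a i)"
    by simp
qed

lemma agree_pow: "agree c F H \<Longrightarrow> agree c (F ^ k) (H ^ k)"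
proof (induction k)
  case 0 thus ?case by (simp add: agree_def)
next
  case (Suc k) show ?case unfolding power_Suc by (rule agree_mult[OF Suc.prems Suc.IH[OF Suc.prems]])
qed

lemma fin_smul: "fin d \<Longrightarrow> fin (\<lambda>i. k * d i)"
  unfolding fin_def by (rule finite_subset[of _ "{i. d i \<noteq> 0}"]) auto

lemma mc_pow:
  assumes "fin d"
  shows "Abs_fs (mc a d) ^ k = Abs_fs (mc (a ^ k :: 'a::comm_semiring_1) (\<lambda>i. k * d i))"
proof (induction k)
  case 0 thus ?case by (simp add: one_fs_def ps_one_mc)
next
  case (Suc k)
  have "Abs_fs (mc a d) ^ Suc k = Abs_fs (mc a d) * Abs_fs (mc (a ^ k) (\<lambda>i. k * d i))"
    using Suc by simp
  also have "\<dots> = Abs_fs (ps_mult (mc a d) (mc (a ^ k) (\<lambda>i. k * d i)))"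
    by (simp add: times_fs_def Abs_fs_inverse mc_FS assms fin_smul)
  also have "\<dots> = Abs_fs (mc (a ^ Suc k) (\<lambda>i. Suc k * d i))"
    by (simp add: mc_mult assms fin_smul)
  finally show ?case .
qed

lemma pow_support:
  fixes f :: "'a::comm_semiring_1 mps"
  assumes f: "f \<in> FS" and pr: "prime CHAR('a)" and Q: "Q = CHAR('a) ^ e"
    and nz: "ps_pow f Q c \<noteq> 0"
  shows "\<exists>d. c = (\<lambda>i. Q * d i) \<and> f d \<noteq> 0"
proof (cases "fin c")
  case False
  have "ps_pow f Q \<in> FS" using Rep_fs ps_pow_Rep[OF f] by simp
  thus ?thesis using False nz by (simp add: FS_def)
next
  case True
  let ?D = "{a. \<forall>i. a i \<le> c i}"
  define t where "t = (\<Sum>d\<in>?D. Abs_fs (mc (f d) d))"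
  have finD: "finite ?D" using finite_le[OF True] .
  have findd: "d \<in> ?D \<Longrightarrow> fin d" for d using fin_le[OF True] by auto
  have "agree c (Abs_fs f) t"
    unfolding agree_def t_def Rep_fs_sum
  proof (intro allI impI)
    fix x assume x: "\<forall>i. x i \<le> c i"
    have "(\<Sum>d\<in>?D. Rep_fs (Abs_fs (mc (f d) d)) x) = (\<Sum>d\<in>?D. if x = d then f x else 0)"
    proof (rule sum.cong)
      fix d assume "d \<in> ?D"
      hence "Rep_fs (Abs_fs (mc (f d) d)) = mc (f d) d" by (rule Abs_fs_inverse[OF mc_FS[OF findd]])
      thus "Rep_fs (Abs_fs (mc (f d) d)) x = (if x = d then f x else 0)" by (simp add: mc_def)
    qed simp
    also have "\<dots> = f x" using finD x by (simp add: sum.delta)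
    finally show "Rep_fs (Abs_fs f) x = (\<Sum>d\<in>?D. Rep_fs (Abs_fs (mc (f d) d)) x)"
      using f by (simp add: Abs_fs_inverse)
  qed
  hence ag: "agree c (Abs_fs f ^ Q) (t ^ Q)" by (rule agree_pow)
  have prF: "prime CHAR('a fs)" using pr by (simp add: CHAR_fs)
  have "t ^ Q = (\<Sum>d\<in>?D. Abs_fs (mc (f d) d) ^ Q)"
    unfolding t_def by (rule freshmans_dream_sum'[OF prF]) (simp add: Q CHAR_fs)
  also have "\<dots> = (\<Sum>d\<in>?D. Abs_fs (mc (f d ^ Q) (\<lambda>i. Q * d i)))"
    by (rule sum.cong) (auto simp: mc_pow findd)
  finally have tq: "Rep_fs (t ^ Q) c = (\<Sum>d\<in>?D. mc (f d ^ Q) (\<lambda>i. Q * d i) c)"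
    by (simp add: Rep_fs_sum Abs_fs_inverse mc_FS findd fin_smul)
  have "Rep_fs (t ^ Q) c \<noteq> 0"
    using ag nz ps_pow_Rep[OF f] unfolding agree_def by auto
  then obtain d where "mc (f d ^ Q) (\<lambda>i. Q * d i) c \<noteq> 0"
    using tq by (metis (mono_tags, lifting) sum.neutral)
  have Qpos: "Q > 0" using pr Q by (simp add: prime_gt_0_nat)
  hence "c = (\<lambda>i. Q * d i)" "f d \<noteq> 0" using \<open>mc (f d ^ Q) (\<lambda>i. Q * d i) c \<noteq> 0\<close>
    by (auto simp: mc_def zero_power split: if_splits)
  thus ?thesis by blast
qed


definition X :: "nat \<Rightarrow> (nat \<Rightarrow> nat) set" where
  "X n = {c. \<forall>i\<ge>n. c i = 0}"

definition sup_ideal :: "nat \<Rightarrow> (nat \<Rightarrow> nat) set \<Rightarrow> ('a::comm_semiring_1) mps set" where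
  "sup_ideal n U = {f \<in> ps_carrier n. \<forall>c. f c \<noteq> 0 \<longrightarrow> c \<in> U}"

definition upset :: "(nat \<Rightarrow> nat) set \<Rightarrow> bool" where
  "upset U \<longleftrightarrow> (\<forall>a b. a \<in> U \<longrightarrow> (\<forall>i. a i \<le> b i) \<longrightarrow> b \<in> U)"

definition up :: "(nat \<Rightarrow> nat) set \<Rightarrow> (nat \<Rightarrow> nat) set" where
  "up M = {c. \<exists>m\<in>M. \<forall>i. m i \<le> c i}"

lemma upset_up: "upset (up M)"
  unfolding upset_def up_def
proof (intro allI impI)
  fix a b assume "a \<in> {c. \<exists>m\<in>M. \<forall>i. m i \<le> c i}" and ab: "\<forall>i. a i \<le> b i"
  then obtain m where m: "m \<in> M" "\<forall>i. m i \<le> a i" by blast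
  have "\<forall>i. m i \<le> b i"
  proof
    fix i show "m i \<le> b i" using m(2)[rule_format, of i] ab[rule_format, of i] by arith
  qed
  thus "b \<in> {c. \<exists>m\<in>M. \<forall>i. m i \<le> c i}" using m(1) by blast
qed

lemma upset_Un: "upset U \<Longrightarrow> upset V \<Longrightarrow> upset (U \<union> V)"
  unfolding upset_def by blast

lemma X_fin:
  assumes "c \<in> X n" shows "fin c"
proof -
  have "{i. c i \<noteq> 0} \<subseteq> {..<n}"
  proof
    fix i assume "i \<in> {i. c i \<noteq> 0}"
    thus "i \<in> {..<n}" using assms unfolding X_def by (cases "i < n") auto
  qed
  thus ?thesis unfolding fin_def by (rule finite_subset) simp
qed

lemma carrier_FS: "ps_carrier n \<subseteq> FS"
proof
  fix f :: "'a mps" assume f: "f \<in> ps_carrier n"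
  { fix c assume "\<not> fin c"
    hence "\<exists>i\<ge>n. c i \<noteq> 0" using X_fin unfolding X_def by blast
    hence "f c = 0" using f unfolding ps_carrier_def by blast }
  thus "f \<in> FS" unfolding FS_def by blast
qed

lemma carrier_supp: "f \<in> ps_carrier n \<Longrightarrow> f c \<noteq> 0 \<Longrightarrow> c \<in> X n"
  unfolding ps_carrier_def X_def by auto

lemma carrier_mult:
  assumes f: "f \<in> ps_carrier n" and g: "g \<in> ps_carrier n"
  shows "ps_mult f g \<in> ps_carrier n"
  unfolding ps_carrier_def
proof (intro CollectI allI impI)
  fix c :: "nat \<Rightarrow> nat" assume c: "\<exists>i\<ge>n. c i \<noteq> 0"
  show "ps_mult f g c = 0"
  proof (rule ccontr)
    assume nz: "ps_mult f g c \<noteq> 0"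
    obtain a where a: "\<forall>i. a i \<le> c i" "f a \<noteq> 0" "g (\<lambda>i. c i - a i) \<noteq> 0"
      using mult_support[OF nz] by blast
    have X1: "a \<in> X n" by (rule carrier_supp[of f n a]) (use f a(2) in simp_all)
    have X2: "(\<lambda>i. c i - a i) \<in> X n" by (rule carrier_supp[of g n "\<lambda>i. c i - a i"]) (use g a(3) in simp_all)
    obtain i where i: "i \<ge> n" "c i \<noteq> 0" using c by blast
    have "a i = 0" using X1 i(1) unfolding X_def by simp
    moreover have "c i - a i = 0" using X2 i(1) unfolding X_def by simp
    ultimately show False using i(2) by simp
  qed
qed

lemma mc_carrier: "c \<in> X n \<Longrightarrow> mc a c \<in> ps_carrier n"
  unfolding ps_carrier_def mc_def X_def by auto

lemma sup_ideal_is: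
  assumes "upset U" shows "ps_is_ideal n (sup_ideal n U :: 'a::comm_semiring_1 mps set)"
  unfolding ps_is_ideal_def
proof (intro conjI ballI)
  show "sup_ideal n U \<subseteq> ps_carrier n" unfolding sup_ideal_def by auto
  show "ps_zero \<in> sup_ideal n U"
    unfolding sup_ideal_def ps_zero_def ps_carrier_def by auto
  fix f g :: "'a mps" assume f: "f \<in> sup_ideal n U"
  { assume g: "g \<in> sup_ideal n U"
    have "ps_add f g \<in> ps_carrier n"
      using f g unfolding sup_ideal_def ps_carrier_def ps_add_def by auto
    moreover have "c \<in> U" if "ps_add f g c \<noteq> 0" for c
    proof -
      have "f c \<noteq> 0 \<or> g c \<noteq> 0" using that unfolding ps_add_def by auto
      thus ?thesis using f g unfolding sup_ideal_def by blast
    qed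
    ultimately show "ps_add f g \<in> sup_ideal n U" unfolding sup_ideal_def by blast }
  { fix r :: "'a mps" assume r: "r \<in> ps_carrier n"
    have "ps_mult r f \<in> ps_carrier n" using carrier_mult r f unfolding sup_ideal_def by blast
    moreover have "c \<in> U" if nz: "ps_mult r f c \<noteq> 0" for c
    proof -
      obtain a where a: "\<forall>i. a i \<le> c i" "r a \<noteq> 0" "f (\<lambda>i. c i - a i) \<noteq> 0"
        using mult_support[OF nz] by blast
      have fU: "\<forall>c. f c \<noteq> 0 \<longrightarrow> c \<in> U" using f unfolding sup_ideal_def by simp
      have U1: "(\<lambda>i. c i - a i) \<in> U" using fU[rule_format, OF a(3)] .
      have "\<forall>i. c i - a i \<le> c i" by simp
      thus ?thesis using assms[unfolded upset_def, rule_format, OF U1] by simp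
    qed
    ultimately show "ps_mult r f \<in> sup_ideal n U" unfolding sup_ideal_def by blast }
qed

lemma ps_ideal_least: "ps_is_ideal n J \<Longrightarrow> G \<subseteq> J \<Longrightarrow> ps_ideal n G \<subseteq> J"
  unfolding ps_ideal_def by blast

lemma ps_ideal_mono: "G \<subseteq> G' \<Longrightarrow> ps_ideal n G \<subseteq> ps_ideal n G'"
  unfolding ps_ideal_def by blast

lemma ps_ideal_memI: "(\<And>J. ps_is_ideal n J \<Longrightarrow> G \<subseteq> J \<Longrightarrow> f \<in> J) \<Longrightarrow> f \<in> ps_ideal n G"
  unfolding ps_ideal_def by blast

lemma gen_aux:
  assumes "finite M" "ps_is_ideal n J" "ps_monom ` M \<subseteq> J" "M \<subseteq> X n"
    "f \<in> sup_ideal n (up M)"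
  shows "(f :: 'a :: comm_semiring_1 mps) \<in> J"
  using assms
proof (induction M arbitrary: f rule: finite_induct)
  case empty
  hence "f = ps_zero" unfolding sup_ideal_def up_def ps_zero_def by auto
  thus ?case using empty unfolding ps_is_ideal_def by auto
next
  case (insert m M)
  define f1 where "f1 = (\<lambda>c. if \<forall>i. m i \<le> c i then f c else 0)"
  define f2 where "f2 = (\<lambda>c. if \<forall>i. m i \<le> c i then 0 else f c)"
  define h where "h = (\<lambda>d. f (\<lambda>i. d i + m i))"
  have mX: "m \<in> X n" using insert by auto
  have fc: "f \<in> ps_carrier n" using insert unfolding sup_ideal_def by auto
  have eq: "f = ps_add f1 f2" unfolding f1_def f2_def ps_add_def by auto
  have "f2 \<in> sup_ideal n (up M)"
    using insert(7) unfolding sup_ideal_def f2_def up_def ps_carrier_def by auto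
  hence f2J: "f2 \<in> J" using insert by auto
  have hc: "h \<in> ps_carrier n"
    unfolding ps_carrier_def
  proof (intro CollectI allI impI)
    fix d :: "nat \<Rightarrow> nat" assume "\<exists>i\<ge>n. d i \<noteq> 0"
    hence "\<exists>i\<ge>n. (\<lambda>i. d i + m i) i \<noteq> 0" by auto
    hence "f (\<lambda>i. d i + m i) = 0"
      using fc[unfolded ps_carrier_def, simplified, rule_format, of "\<lambda>i. d i + m i"] by simp
    thus "h d = 0" unfolding h_def .
  qed
  have "f1 = ps_mult h (ps_monom m)"
  proof
    fix c
    have e: "(\<forall>i. m i \<le> c i) \<Longrightarrow> (\<lambda>i. c i - m i + m i) = c" by (auto simp: fun_eq_iff)
    show "f1 c = ps_mult h (ps_monom m) c"
      unfolding ps_monom_mc using carrier_FS hc X_fin[OF mX]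
      by (subst ps_mult_mc_right) (auto simp: f1_def h_def e)
  qed
  moreover have "ps_monom m \<in> J" using insert by auto
  ultimately have "f1 \<in> J" using hc insert(4) unfolding ps_is_ideal_def by auto
  thus ?case using f2J eq insert(4) unfolding ps_is_ideal_def by auto
qed

lemma gen:
  assumes "finite M" "M \<subseteq> X n"
  shows "ps_ideal n (ps_monom ` M) = (sup_ideal n (up M) :: 'a :: comm_semiring_1 mps set)"
proof
  have "ps_monom ` M \<subseteq> (sup_ideal n (up M) :: 'a mps set)"
    using assms unfolding sup_ideal_def up_def
    by (auto simp: ps_monom_mc intro!: mc_carrier) (auto simp: mc_def split: if_splits)
  thus "ps_ideal n (ps_monom ` M) \<subseteq> (sup_ideal n (up M) :: 'a mps set)"
    by (intro ps_ideal_least sup_ideal_is upset_up)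
  show "sup_ideal n (up M) \<subseteq> (ps_ideal n (ps_monom ` M) :: 'a mps set)"
  proof
    fix f :: "'a mps" assume f: "f \<in> sup_ideal n (up M)"
    show "f \<in> ps_ideal n (ps_monom ` M)"
    proof (rule ps_ideal_memI)
      fix J :: "'a mps set" assume "ps_is_ideal n J" "ps_monom ` M \<subseteq> J"
      thus "f \<in> J" by (rule gen_aux[OF assms(1) _ _ assms(2) f])
    qed
  qed
qed

lemma ideal_sum:
  assumes "upset U" "upset V"
  shows "ps_ideal n (sup_ideal n U \<union> sup_ideal n V) = (sup_ideal n (U \<union> V) :: 'a :: comm_semiring_1 mps set)"
proof
  show "ps_ideal n (sup_ideal n U \<union> sup_ideal n V) \<subseteq> (sup_ideal n (U \<union> V) :: 'a mps set)"
    by (intro ps_ideal_least sup_ideal_is upset_Un assms) (auto simp: sup_ideal_def)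
  show "sup_ideal n (U \<union> V) \<subseteq> (ps_ideal n (sup_ideal n U \<union> sup_ideal n V) :: 'a mps set)"
  proof
    fix f :: "'a mps" assume f: "f \<in> sup_ideal n (U \<union> V)"
    define f1 where "f1 = (\<lambda>c. if c \<in> U then f c else 0)"
    define f2 where "f2 = (\<lambda>c. if c \<in> U then 0 else f c)"
    have eq: "f = ps_add f1 f2" unfolding f1_def f2_def ps_add_def by auto
    have "f1 \<in> sup_ideal n U" "f2 \<in> sup_ideal n V"
      using f unfolding f1_def f2_def sup_ideal_def ps_carrier_def by auto
    show "f \<in> ps_ideal n (sup_ideal n U \<union> sup_ideal n V)"
    proof (rule ps_ideal_memI)
      fix J :: "'a mps set" assume J: "ps_is_ideal n J" "sup_ideal n U \<union> sup_ideal n V \<subseteq> J"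
      hence "f1 \<in> J" "f2 \<in> J" using \<open>f1 \<in> sup_ideal n U\<close> \<open>f2 \<in> sup_ideal n V\<close> by auto
      thus "f \<in> J" using J(1) eq unfolding ps_is_ideal_def by simp
    qed
  qed
qed

lemma pow_monom:
  assumes "fin m"
  shows "ps_pow (ps_monom m) k = (ps_monom (\<lambda>i. k * m i) :: 'a :: comm_semiring_1 mps)"
  unfolding ps_monom_mc
  by (simp add: ps_pow_Rep mc_FS assms mc_pow Abs_fs_inverse fin_smul)

lemma carrier_pow: "f \<in> ps_carrier n \<Longrightarrow> ps_pow f k \<in> ps_carrier n"
  by (induction k) (auto simp: ps_one_mc intro: mc_carrier carrier_mult simp: X_def)

lemma frob:
  assumes pr: "prime CHAR('a)" and Q: "Q = CHAR('a) ^ e" and M: "finite M" "M \<subseteq> X n"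
  shows "ps_frob n Q (sup_ideal n (up M)) = (sup_ideal n (up ((\<lambda>m i. Q * m i) ` M)) :: 'a :: comm_semiring_1 mps set)"
proof
  have "{ps_pow f Q | f. f \<in> (sup_ideal n (up M) :: 'a mps set)} \<subseteq> sup_ideal n (up ((\<lambda>m i. Q * m i) ` M))"
  proof safe
    fix f :: "'a mps" assume f: "f \<in> sup_ideal n (up M)"
    hence fc: "f \<in> ps_carrier n" unfolding sup_ideal_def by auto
    { fix c assume "ps_pow f Q c \<noteq> 0"
      then obtain d where d: "c = (\<lambda>i. Q * d i)" "f d \<noteq> 0"
        using pow_support[OF _ pr Q] carrier_FS fc by blast
      then obtain m where "m \<in> M" "\<forall>i. m i \<le> d i" using f unfolding sup_ideal_def up_def by blast
      hence "c \<in> up ((\<lambda>m i. Q * m i) ` M)" unfolding up_def d by auto }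
    thus "ps_pow f Q \<in> sup_ideal n (up ((\<lambda>m i. Q * m i) ` M))"
      unfolding sup_ideal_def using carrier_pow fc by blast
  qed
  thus "ps_frob n Q (sup_ideal n (up M)) \<subseteq> (sup_ideal n (up ((\<lambda>m i. Q * m i) ` M)) :: 'a mps set)"
    unfolding ps_frob_def by (intro ps_ideal_least sup_ideal_is upset_up)
  have QX: "(\<lambda>m i. Q * m i) ` M \<subseteq> X n" using M unfolding X_def by auto
  have "ps_monom ` ((\<lambda>m i. Q * m i) ` M) \<subseteq> {ps_pow f Q | f. f \<in> (sup_ideal n (up M) :: 'a mps set)}"
  proof (rule subsetI)
    fix x :: "'a mps" assume "x \<in> ps_monom ` ((\<lambda>m i. Q * m i) ` M)"
    then obtain m where m: "m \<in> M" and x: "x = ps_monom (\<lambda>i. Q * m i)" by blast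
    have "ps_monom m \<in> ps_ideal n (ps_monom ` M :: 'a mps set)"
      by (rule ps_ideal_memI) (use m in auto)
    hence mi: "ps_monom m \<in> (sup_ideal n (up M) :: 'a mps set)"
      using gen[OF M, where 'a='a] by simp
    have mX: "m \<in> X n" using m M by auto
    have "ps_monom (\<lambda>i. Q * m i) = (ps_pow (ps_monom m) Q :: 'a mps)"
      by (rule pow_monom[OF X_fin[OF mX], where 'a='a, symmetric])
    thus "x \<in> {ps_pow f Q | f. f \<in> (sup_ideal n (up M) :: 'a mps set)}"
      using mi x by blast
  qed
  hence "ps_ideal n (ps_monom ` ((\<lambda>m i. Q * m i) ` M)) \<subseteq> ps_frob n Q (sup_ideal n (up M) :: 'a mps set)"
    unfolding ps_frob_def by (rule ps_ideal_mono)
  thus "(sup_ideal n (up ((\<lambda>m i. Q * m i) ` M)) :: 'a mps set) \<subseteq> ps_frob n Q (sup_ideal n (up M))"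
    using gen[OF _ QX, where 'a='a] M by simp
qed

lemma colon:
  assumes U: "upset U" and G: "G \<subseteq> X n"
  shows "ps_colon n (sup_ideal n U) (sup_ideal n (up G)) =
    (sup_ideal n {c. \<forall>m\<in>G. (\<lambda>i. c i + m i) \<in> U} :: 'a :: comm_semiring_1 mps set)"
proof
  show "ps_colon n (sup_ideal n U) (sup_ideal n (up G)) \<subseteq> (sup_ideal n {c. \<forall>m\<in>G. (\<lambda>i. c i + m i) \<in> U} :: 'a mps set)"
  proof
    fix f :: "'a mps" assume f: "f \<in> ps_colon n (sup_ideal n U) (sup_ideal n (up G))"
    hence fc: "f \<in> ps_carrier n" unfolding ps_colon_def by auto
    { fix c m assume c: "f c \<noteq> 0" and m: "m \<in> G"
      have mi: "ps_monom m \<in> (sup_ideal n (up G) :: 'a mps set)"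
        using m G unfolding sup_ideal_def up_def
        by (auto simp: ps_monom_mc intro!: mc_carrier) (auto simp: mc_def split: if_splits)
      have "ps_mult f (ps_monom m) (\<lambda>i. c i + m i) = f c"
        unfolding ps_monom_mc using carrier_FS fc X_fin m G
        by (subst ps_mult_mc_right) auto
      hence "(\<lambda>i. c i + m i) \<in> U" using f mi c unfolding ps_colon_def sup_ideal_def by auto }
    thus "f \<in> sup_ideal n {c. \<forall>m\<in>G. (\<lambda>i. c i + m i) \<in> U}" using fc unfolding sup_ideal_def by auto
  qed
  show "(sup_ideal n {c. \<forall>m\<in>G. (\<lambda>i. c i + m i) \<in> U} :: 'a mps set) \<subseteq> ps_colon n (sup_ideal n U) (sup_ideal n (up G))"
  proof
    fix f :: "'a mps" assume f: "f \<in> sup_ideal n {c. \<forall>m\<in>G. (\<lambda>i. c i + m i) \<in> U}"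
    { fix g :: "'a mps" assume g: "g \<in> sup_ideal n (up G)"
      have "ps_mult f g \<in> ps_carrier n" using f g carrier_mult unfolding sup_ideal_def by auto
      moreover
      { fix d assume "ps_mult f g d \<noteq> 0"
        then obtain a where a: "\<forall>i. a i \<le> d i" "f a \<noteq> 0" "g (\<lambda>i. d i - a i) \<noteq> 0"
          using mult_support by blast
        then obtain m where m: "m \<in> G" "\<forall>i. m i \<le> d i - a i" using g unfolding sup_ideal_def up_def by auto
        have "(\<lambda>i. a i + m i) \<in> U" using f a m unfolding sup_ideal_def by auto
        moreover have "\<forall>i. a i + m i \<le> d i"
        proof
          fix i show "a i + m i \<le> d i" using a(1)[rule_format, of i] m(2)[rule_format, of i] by arith
        qed
        ultimately have "d \<in> U" using U unfolding upset_def by blast }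
      ultimately have "ps_mult f g \<in> sup_ideal n U" unfolding sup_ideal_def by blast }
    thus "f \<in> ps_colon n (sup_ideal n U) (sup_ideal n (up G))"
      using f unfolding ps_colon_def sup_ideal_def by auto
  qed
qed

lemma Inter_sup: "ps_Inter n ((\<lambda>a. sup_ideal n (R a)) ` A) = sup_ideal n (\<Inter>a\<in>A. R a)"
  unfolding ps_Inter_def sup_ideal_def by auto

lemma sup_ideal_mc: "c \<in> X n \<Longrightarrow> (mc (1::'a::comm_semiring_1) c \<in> sup_ideal n U) \<longleftrightarrow> c \<in> U"
  unfolding sup_ideal_def using mc_carrier by (auto simp: mc_def split: if_splits)

lemma sup_ideal_cong: "U \<inter> X n = V \<inter> X n \<Longrightarrow> sup_ideal n U = sup_ideal n V"
  unfolding sup_ideal_def using carrier_supp by blast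

lemma sup_ideal_eqD:
  assumes "sup_ideal n U = (sup_ideal n V :: 'a::comm_semiring_1 mps set)" "c \<in> X n"
  shows "c \<in> U \<longleftrightarrow> c \<in> V"
  using sup_ideal_mc[of c n U, where 'a='a] sup_ideal_mc[of c n V, where 'a='a] assms by simp


lemma comb:
  fixes Q :: nat
  assumes Q1: "Q \<ge> 1"
    and G: "G \<subseteq> X n" "\<forall>g\<in>G. \<forall>i. g i \<le> 1"
    and A: "\<forall>\<alpha>\<in>A. \<alpha> \<in> X n \<and> (\<forall>i. \<alpha> i \<le> 1)"
    and UP: "\<forall>c\<in>X n. c \<in> up G \<longleftrightarrow> (\<forall>\<alpha>\<in>A. \<exists>i<n. \<alpha> i \<noteq> 0 \<and> 1 \<le> c i)"
    and IRR: "\<forall>\<beta>\<in>A. \<exists>w\<in>X n. (\<forall>\<alpha>\<in>A-{\<beta>}. \<exists>i<n. \<alpha> i \<noteq> 0 \<and> 1 \<le> w i) \<and> \<not>(\<exists>i<n. \<beta> i \<noteq> 0 \<and> 1 \<le> w i)"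
    and c: "c \<in> X n"
  shows "(\<forall>m\<in>G. (\<lambda>i. c i + m i) \<in> up ((\<lambda>m i. Q * m i) ` G)) \<longleftrightarrow>
         (\<forall>\<alpha>\<in>A. (\<exists>i<n. \<alpha> i \<noteq> 0 \<and> Q \<le> c i) \<or> (\<forall>i. (Q - 1) * \<alpha> i \<le> c i))"
proof
  assume H: "\<forall>m\<in>G. (\<lambda>i. c i + m i) \<in> up ((\<lambda>m i. Q * m i) ` G)"
  show "\<forall>\<alpha>\<in>A. (\<exists>i<n. \<alpha> i \<noteq> 0 \<and> Q \<le> c i) \<or> (\<forall>i. (Q - 1) * \<alpha> i \<le> c i)"
  proof (rule ballI, rule ccontr)
    fix \<beta> assume b: "\<beta> \<in> A" and nb: "\<not> ((\<exists>i<n. \<beta> i \<noteq> 0 \<and> Q \<le> c i) \<or> (\<forall>i. (Q - 1) * \<beta> i \<le> c i))"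
    then obtain j where j: "(Q - 1) * \<beta> j > c j" by (auto simp: not_le)
    have bX: "\<beta> \<in> X n" "\<forall>i. \<beta> i \<le> 1" using A b by auto
    have "\<beta> j \<noteq> 0" using j by (cases "\<beta> j = 0") auto
    hence bj: "\<beta> j = 1" using bX(2)[rule_format, of j] by arith
    have jn: "j < n"
    proof (rule ccontr)
      assume "\<not> j < n" thus False using bX(1) bj unfolding X_def by auto
    qed
    have cj: "c j < Q - 1" using j bj by simp
    obtain w where w: "w \<in> X n" "\<forall>\<alpha>\<in>A-{\<beta>}. \<exists>i<n. \<alpha> i \<noteq> 0 \<and> 1 \<le> w i"
      "\<not>(\<exists>i<n. \<beta> i \<noteq> 0 \<and> 1 \<le> w i)" using IRR b by blast
    define w' where "w' = (\<lambda>i. if i < n \<and> (w i \<noteq> 0 \<or> i = j) then 1 else (0::nat))"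
    have w'X: "w' \<in> X n" unfolding w'_def X_def by auto
    have "\<forall>\<alpha>\<in>A. \<exists>i<n. \<alpha> i \<noteq> 0 \<and> 1 \<le> w' i"
    proof
      fix \<alpha> assume a: "\<alpha> \<in> A"
      show "\<exists>i<n. \<alpha> i \<noteq> 0 \<and> 1 \<le> w' i"
      proof (cases "\<alpha> = \<beta>")
        case True thus ?thesis using bj jn by (intro exI[of _ j]) (auto simp: w'_def)
      next
        case False
        then obtain i where "i < n" "\<alpha> i \<noteq> 0" "1 \<le> w i" using w(2) a by blast
        thus ?thesis by (intro exI[of _ i]) (auto simp: w'_def)
      qed
    qed
    hence "w' \<in> up G" using UP w'X by blast
    then obtain m where m: "m \<in> G" "\<forall>i. m i \<le> w' i" unfolding up_def by blast
    then obtain g where g: "g \<in> G" "\<forall>i. Q * g i \<le> c i + m i" using H unfolding up_def by blast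
    have "g \<in> up G" unfolding up_def using g by auto
    hence "\<exists>i<n. \<beta> i \<noteq> 0 \<and> 1 \<le> g i" using UP G g b by blast
    then obtain i where i: "i < n" "\<beta> i \<noteq> 0" "1 \<le> g i" by blast
    have "Q \<le> c i + m i" using g(2) i(3) by (metis mult.right_neutral mult_le_mono2 order_trans)
    moreover have "w i = 0" using w(3) i by auto
    moreover have "c i < Q" using nb i by auto
    moreover have mi1: "m i \<le> 1" using G(2) m(1) by blast
    ultimately show False
    proof (cases "i = j")
      case True thus False using \<open>Q \<le> c i + m i\<close> cj mi1 by arith
    next
      case False
      hence "w' i = 0" unfolding w'_def using \<open>w i = 0\<close> by auto
      hence "m i = 0" using m(2)[rule_format, of i] by simp
      thus False using \<open>Q \<le> c i + m i\<close> \<open>c i < Q\<close> by arith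
    qed
  qed
next
  assume H: "\<forall>\<alpha>\<in>A. (\<exists>i<n. \<alpha> i \<noteq> 0 \<and> Q \<le> c i) \<or> (\<forall>i. (Q - 1) * \<alpha> i \<le> c i)"
  show "\<forall>m\<in>G. (\<lambda>i. c i + m i) \<in> up ((\<lambda>m i. Q * m i) ` G)"
  proof
    fix m assume m: "m \<in> G"
    define \<tau> where "\<tau> = (\<lambda>i. if i < n \<and> Q \<le> c i + m i then 1 else (0::nat))"
    have tX: "\<tau> \<in> X n" unfolding \<tau>_def X_def by auto
    have mX: "m \<in> X n" using m G by auto
    have mup: "m \<in> up G" using m unfolding up_def by auto
    have "\<forall>\<alpha>\<in>A. \<exists>i<n. \<alpha> i \<noteq> 0 \<and> 1 \<le> \<tau> i"
    proof
      fix \<alpha> assume a: "\<alpha> \<in> A"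
      show "\<exists>i<n. \<alpha> i \<noteq> 0 \<and> 1 \<le> \<tau> i"
      proof (cases "\<exists>i<n. \<alpha> i \<noteq> 0 \<and> Q \<le> c i")
        case True
        then obtain i where i: "i < n" "\<alpha> i \<noteq> 0" "Q \<le> c i" by blast
        have "Q \<le> c i + m i" using i(3) by arith
        thus ?thesis using i by (intro exI[of _ i]) (simp add: \<tau>_def)
      next
        case False
        hence ac: "\<forall>i. (Q - 1) * \<alpha> i \<le> c i" using H a by blast
        obtain i where i: "i < n" "\<alpha> i \<noteq> 0" "1 \<le> m i" using UP mX mup a by blast
        have "\<alpha> i = 1" using A a i by (meson le_antisym less_one not_le)
        hence "Q - 1 \<le> c i" using ac by (metis mult.right_neutral)
        hence "Q \<le> c i + m i" using i by linarith
        thus ?thesis using i by (auto simp: \<tau>_def)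
      qed
    qed
    hence "\<tau> \<in> up G" using UP tX by blast
    then obtain g where g: "g \<in> G" "\<forall>i. g i \<le> \<tau> i" unfolding up_def by blast
    have "\<forall>i. Q * g i \<le> c i + m i"
    proof
      fix i show "Q * g i \<le> c i + m i"
      proof (cases "g i = 0")
        case False
        have "g i \<le> 1" using G(2) g(1) by blast
        hence gi: "g i = 1" using False by arith
        hence "\<tau> i = 1" using g(2)[rule_format, of i] unfolding \<tau>_def by (auto split: if_splits)
        hence "Q \<le> c i + m i" unfolding \<tau>_def by (auto split: if_splits)
        thus ?thesis using gi by simp
      qed simp
    qed
    thus "(\<lambda>i. c i + m i) \<in> up ((\<lambda>m i. Q * m i) ` G)" unfolding up_def using g(1) by auto
  qed
qed


definition E :: "nat \<Rightarrow> (nat \<Rightarrow> nat) \<Rightarrow> (nat \<Rightarrow> nat) set" where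
  "E n \<alpha> = (\<lambda>i j. if j = i then 1 else 0) ` {i. i < n \<and> \<alpha> i \<noteq> 0}"

lemma E_props: "finite (E n \<alpha>)" "E n \<alpha> \<subseteq> X n"
  unfolding E_def X_def by auto

lemma face_eq: "face_ideal n \<alpha> = (sup_ideal n (up (E n \<alpha>)) :: 'a::comm_semiring_1 mps set)"
proof -
  have "{ps_var i | i. i < n \<and> \<alpha> i \<noteq> 0} = (ps_monom ` E n \<alpha> :: 'a mps set)"
    unfolding E_def ps_var_def by auto
  thus ?thesis unfolding face_ideal_def using gen[OF E_props] by simp
qed

lemma up_E: "c \<in> up (E n \<alpha>) \<longleftrightarrow> (\<exists>i<n. \<alpha> i \<noteq> 0 \<and> 1 \<le> c i)"
  unfolding up_def E_def by auto

lemma up_QE: "c \<in> up ((\<lambda>m i. Q * m i) ` E n \<alpha>) \<longleftrightarrow> (\<exists>i<n. \<alpha> i \<noteq> 0 \<and> Q \<le> c i)"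
  unfolding up_def E_def by auto

lemma is01_X: "is01 n \<alpha> \<Longrightarrow> \<alpha> \<in> X n"
  unfolding is01_def X_def by auto

lemma finite_is01: "finite {\<alpha>. is01 n \<alpha>}"
proof -
  have "{\<alpha>. is01 n \<alpha>} \<subseteq> (\<lambda>S i. if i \<in> S then 1 else 0) ` Pow {..<n}"
  proof
    fix \<alpha> assume a: "\<alpha> \<in> {\<alpha>. is01 n \<alpha>}"
    have "\<alpha> = (\<lambda>i. if i \<in> {i. i < n \<and> \<alpha> i \<noteq> 0} then 1 else 0)"
    proof (rule ext)
      fix i
      have "\<alpha> i \<le> 1" "i \<ge> n \<longrightarrow> \<alpha> i = 0" using a unfolding is01_def by auto
      thus "\<alpha> i = (if i \<in> {i. i < n \<and> \<alpha> i \<noteq> 0} then 1 else 0)" by (cases "i < n") auto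
    qed
    thus "\<alpha> \<in> (\<lambda>S i. if i \<in> S then 1 else 0) ` Pow {..<n}" by blast
  qed
  thus ?thesis by (rule finite_subset) auto
qed


theorem proposition3p2:
  fixes n :: nat and e :: nat
    and I :: "('k::field) mps set"
    and A :: "(nat \<Rightarrow> nat) set"
  assumes char_pos: "CHAR('k) > 0"
    and sqfree: "sqfree_monomial_ideal n I"
    and finA: "finite A"
    and A01: "\<forall>\<alpha>\<in>A. is01 n \<alpha>"
    and decomp: "I = ps_Inter n ((\<lambda>\<alpha>. face_ideal n \<alpha>) ` A)"
    and irredundant: "\<forall>\<beta>\<in>A. ps_Inter n ((\<lambda>\<alpha>. face_ideal n \<alpha>) ` (A - {\<beta>})) \<noteq> I"
  shows "ps_colon n (ps_frob n (CHAR('k) ^ e) I) I =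
         ps_Inter n ((\<lambda>\<alpha>. ps_ideal_sum n (ps_frob n (CHAR('k) ^ e) (face_ideal n \<alpha>))
                                       (ps_ideal n {ps_pow (ps_monom \<alpha>) (CHAR('k) ^ e - 1)})) ` A)"
proof -
  define Q where "Q = CHAR('k) ^ e"
  have pr: "prime CHAR('k)" using char_pos by (rule prime_CHAR_semidom)
  have Q1: "Q \<ge> 1" unfolding Q_def using char_pos by simp
  obtain G where G01: "\<forall>\<alpha>\<in>G. is01 n \<alpha>" and IG: "I = ps_ideal n (ps_monom ` G)"
    using sqfree unfolding sqfree_monomial_ideal_def by blast
  have finG: "finite G" using G01 finite_is01 by (metis finite_subset mem_Collect_eq subsetI)
  have GX: "G \<subseteq> X n" using G01 is01_X by blast
  have I: "I = sup_ideal n (up G)" using IG gen[OF finG GX] by simp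
  have faces: "(\<lambda>\<alpha>. face_ideal n \<alpha>) ` B = (\<lambda>\<alpha>. (sup_ideal n (up (E n \<alpha>)) :: 'k mps set)) ` B" for B
    by (simp add: face_eq)
  have dec: "sup_ideal n (up G) = (sup_ideal n (\<Inter>\<alpha>\<in>A. up (E n \<alpha>)) :: 'k mps set)"
    using decomp unfolding I faces Inter_sup .
  have UP: "\<forall>c\<in>X n. c \<in> up G \<longleftrightarrow> (\<forall>\<alpha>\<in>A. \<exists>i<n. \<alpha> i \<noteq> 0 \<and> 1 \<le> c i)"
    using sup_ideal_eqD[OF dec] by (simp add: up_E)
  have IRR: "\<forall>\<beta>\<in>A. \<exists>w\<in>X n. (\<forall>\<alpha>\<in>A-{\<beta>}. \<exists>i<n. \<alpha> i \<noteq> 0 \<and> 1 \<le> w i) \<and> \<not>(\<exists>i<n. \<beta> i \<noteq> 0 \<and> 1 \<le> w i)"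
  proof
    fix \<beta> assume b: "\<beta> \<in> A"
    have ne: "sup_ideal n (\<Inter>\<alpha>\<in>A-{\<beta>}. up (E n \<alpha>)) \<noteq> (sup_ideal n (up G) :: 'k mps set)"
      using irredundant b unfolding I faces Inter_sup by blast
    have "(\<Inter>\<alpha>\<in>A-{\<beta>}. up (E n \<alpha>)) \<inter> X n \<noteq> up G \<inter> X n"
    proof
      assume "(\<Inter>\<alpha>\<in>A-{\<beta>}. up (E n \<alpha>)) \<inter> X n = up G \<inter> X n"
      hence "sup_ideal n (\<Inter>\<alpha>\<in>A-{\<beta>}. up (E n \<alpha>)) = (sup_ideal n (up G) :: 'k mps set)"
        by (rule sup_ideal_cong)
      thus False using ne by simp
    qed
    then obtain w where w: "w \<in> X n" "\<not> (w \<in> (\<Inter>\<alpha>\<in>A-{\<beta>}. up (E n \<alpha>)) \<longleftrightarrow> w \<in> up G)"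
      by auto
    have UPw: "w \<in> up G \<longleftrightarrow> (\<forall>\<alpha>\<in>A. \<exists>i<n. \<alpha> i \<noteq> 0 \<and> 1 \<le> w i)"
      using UP w(1) by blast
    have Iw: "w \<in> (\<Inter>\<alpha>\<in>A-{\<beta>}. up (E n \<alpha>)) \<longleftrightarrow> (\<forall>\<alpha>\<in>A-{\<beta>}. \<exists>i<n. \<alpha> i \<noteq> 0 \<and> 1 \<le> w i)"
      by (simp add: up_E)
    have h1: "\<forall>\<alpha>\<in>A-{\<beta>}. \<exists>i<n. \<alpha> i \<noteq> 0 \<and> 1 \<le> w i"
    proof (rule ccontr)
      assume nh: "\<not> (\<forall>\<alpha>\<in>A-{\<beta>}. \<exists>i<n. \<alpha> i \<noteq> 0 \<and> 1 \<le> w i)"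
      hence "w \<notin> up G" using UPw by auto
      thus False using w(2) Iw nh by simp
    qed
    hence "w \<notin> up G" using w(2) Iw by simp
    have nwb: "\<not>(\<exists>i<n. \<beta> i \<noteq> 0 \<and> 1 \<le> w i)"
    proof
      assume hb: "\<exists>i<n. \<beta> i \<noteq> 0 \<and> 1 \<le> w i"
      have "\<forall>\<alpha>\<in>A. \<exists>i<n. \<alpha> i \<noteq> 0 \<and> 1 \<le> w i"
      proof
        fix \<alpha> assume aA: "\<alpha> \<in> A"
        show "\<exists>i<n. \<alpha> i \<noteq> 0 \<and> 1 \<le> w i"
        proof (cases "\<alpha> = \<beta>")
          case True thus ?thesis using hb by simp
        next
          case False thus ?thesis using h1 aA by blast
        qed
      qed
      thus False using UPw \<open>w \<notin> up G\<close> by blast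
    qed
    note nwb
    thus "\<exists>w\<in>X n. (\<forall>\<alpha>\<in>A-{\<beta>}. \<exists>i<n. \<alpha> i \<noteq> 0 \<and> 1 \<le> w i) \<and> \<not>(\<exists>i<n. \<beta> i \<noteq> 0 \<and> 1 \<le> w i)"
      using w(1) h1 by blast
  qed
  have A': "\<forall>\<alpha>\<in>A. \<alpha> \<in> X n \<and> (\<forall>i. \<alpha> i \<le> 1)" using A01 is01_X unfolding is01_def by blast
  have G': "\<forall>g\<in>G. \<forall>i. g i \<le> 1" using G01 unfolding is01_def by blast
  define C where "C = {c. \<forall>m\<in>G. (\<lambda>i. c i + m i) \<in> up ((\<lambda>m i. Q * m i) ` G)}"
  define R where "R = (\<lambda>\<alpha>. up ((\<lambda>m i. Q * m i) ` E n \<alpha>) \<union> up {(\<lambda>i. (Q - 1) * \<alpha> i)})"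
  have LHS: "ps_colon n (ps_frob n Q I) I = sup_ideal n C"
    unfolding I frob[OF pr Q_def finG GX] C_def by (rule colon[OF upset_up GX])
  have trm: "ps_ideal_sum n (ps_frob n Q (face_ideal n \<alpha>)) (ps_ideal n {ps_pow (ps_monom \<alpha>) (Q - 1)})
      = (sup_ideal n (R \<alpha>) :: 'k mps set)" if a: "\<alpha> \<in> A" for \<alpha>
  proof -
    have aX: "\<alpha> \<in> X n" using A' a by blast
    have "{ps_pow (ps_monom \<alpha>) (Q - 1)} = (ps_monom ` {(\<lambda>i. (Q - 1) * \<alpha> i)} :: 'k mps set)"
      using pow_monom[OF X_fin[OF aX]] by simp
    moreover have "{(\<lambda>i. (Q - 1) * \<alpha> i)} \<subseteq> X n" using aX unfolding X_def by auto
    ultimately have "ps_ideal n {ps_pow (ps_monom \<alpha>) (Q - 1)} = (sup_ideal n (up {(\<lambda>i. (Q - 1) * \<alpha> i)}) :: 'k mps set)"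
      using gen[of "{(\<lambda>i. (Q - 1) * \<alpha> i)}" n] by simp
    thus ?thesis
      unfolding ps_ideal_sum_def face_eq frob[OF pr Q_def E_props] R_def
      by (simp add: ideal_sum upset_up)
  qed
  have RHS: "ps_Inter n ((\<lambda>\<alpha>. ps_ideal_sum n (ps_frob n Q (face_ideal n \<alpha>))
                                       (ps_ideal n {ps_pow (ps_monom \<alpha>) (Q - 1)})) ` A)
     = (sup_ideal n (\<Inter>\<alpha>\<in>A. R \<alpha>) :: 'k mps set)"
  proof -
    have "(\<lambda>\<alpha>. ps_ideal_sum n (ps_frob n Q (face_ideal n \<alpha>))
                                       (ps_ideal n {ps_pow (ps_monom \<alpha>) (Q - 1)})) ` A
          = ((\<lambda>\<alpha>. sup_ideal n (R \<alpha>)) ` A :: 'k mps set set)"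
      by (rule image_cong[OF refl]) (rule trm)
    thus ?thesis by (simp only: Inter_sup)
  qed
  have "sup_ideal n C = (sup_ideal n (\<Inter>\<alpha>\<in>A. R \<alpha>) :: 'k mps set)"
  proof (rule sup_ideal_cong, rule set_eqI)
    fix c
    show "c \<in> C \<inter> X n \<longleftrightarrow> c \<in> (\<Inter>\<alpha>\<in>A. R \<alpha>) \<inter> X n"
    proof (cases "c \<in> X n")
      case True
      have r: "c \<in> R \<alpha> \<longleftrightarrow> (\<exists>i<n. \<alpha> i \<noteq> 0 \<and> Q \<le> c i) \<or> (\<forall>i. (Q - 1) * \<alpha> i \<le> c i)" for \<alpha>
      proof -
        have "c \<in> up {(\<lambda>i. (Q - 1) * \<alpha> i)} \<longleftrightarrow> (\<forall>i. (Q - 1) * \<alpha> i \<le> c i)"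
          by (simp add: up_def)
        thus ?thesis unfolding R_def Un_iff up_QE by simp
      qed
      show ?thesis using comb[OF Q1 GX G' A' UP IRR True] True unfolding C_def by (simp add: r)
    qed simp
  qed
  thus ?thesis using LHS RHS unfolding Q_def by simp
qed

end
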